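(* Let data $\mathbf X\in\mathcal X$ have distribution $P_\theta$, $\theta\in\Theta$, with $m$ tasks, decision spaces $\mathcal D_i$ and losses $\ell_i:\mathcal D_i\times\Theta\to[0,1]$. Let $\mathbf s^1:\mathcal X\to\{0,1\}^m$ be any selection rule and $d_i:\mathcal X\times[0,1]\to\mathcal D_i$ decision rules such that (i) $d_i$ controls the $\ell_i$-risk: $\mathbb E_\theta[\ell_i(d_i(\mathbf X;q'),\theta)]\le q'$ for all $q'\in[0,1]$ and $\theta\in\Theta$; (ii) $\ell_i(d_i(\mathbf x;q'),\theta)$ is non-decreasing in $q'$. Let $f(m)=m\sum_{j=1}^m(1/j)$, $\mathbf S^1=\mathbf s^1(\mathbf X)$ with selected set $\mathcal S^1=\{i:S^1_i=1\}$, and $D_i^1=d_i(\mathbf X;q|\mathcal S^1|/f(m))$. Then for all $\theta\in\Theta$ and $q\in[0,1]$, $$\mathbb E_\theta\left[\frac{\sum_{i\in\mathcal S^1}\ell_i(D_i^1,\theta)}{1\vee|\mathcal S^1|}\right]\le q.$$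
   Context: No independence between tasks is assumed; $\mathbb E_\theta$ denotes expectation under $P_\theta$. *)

theory Defs
  imports "HOL-Probability.Probability"
begin

definition fm :: "nat \<Rightarrow> real" where
  "fm m = real m * (\<Sum>j=1..m. 1 / real j)"

definition selected :: "nat \<Rightarrow> ('x \<Rightarrow> nat \<Rightarrow> bool) \<Rightarrow> 'x \<Rightarrow> nat set" where
  "selected m s1 x = {i \<in> {1..m}. s1 x i}"

end

theory Submission
  imports Defs
begin

definition cw :: "nat \<Rightarrow> nat \<Rightarrow> real" where
  "cw m j = 1 / real j - 1 / real (j + 1) + (if j = m then 1 / real (m + 1) else 0)"

lemma cw_nonneg: "1 \<le> j \<Longrightarrow> cw m j \<ge> 0"
  unfolding cw_def by (auto simp: field_simps)

lemma tele: assumes "1 \<le> k" "k \<le> m" shows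
  "(\<Sum>j=k..m. 1 / real j - 1 / real (j + 1)) = 1 / real k - 1 / real (m + 1)"
  using assms(2)
proof (induction m rule: dec_induct)
  case base then show ?case by simp
next
  case (step n)
  note assms
  have "{k..Suc n} = insert (Suc n) {k..n}" using step by auto
  then show ?case using step by simp
qed

lemma sum_cw: "(\<Sum>j=1..m. cw m j * g j) = (\<Sum>j=1..m. (1 / real j - 1 / real (j + 1)) * g j)
   + (if m \<ge> 1 then g m / real (m + 1) else 0)"
proof -
  have "(\<Sum>j=1..m. cw m j * g j) = (\<Sum>j=1..m. (1 / real j - 1 / real (j + 1)) * g j
     + (if j = m then g m / real (m + 1) else 0))"
    unfolding cw_def by (rule sum.cong) (auto simp: field_simps)
  also have "\<dots> = (\<Sum>j=1..m. (1 / real j - 1 / real (j + 1)) * g j)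
     + (\<Sum>j=1..m. (if j = m then g m / real (m + 1) else 0))"
    by (rule sum.distrib)
  also have "(\<Sum>j=1..m. (if j = m then g m / real (m + 1) else 0)) =
     (if m \<ge> 1 then g m / real (m + 1) else 0)"
    by (simp add: sum.delta')
  finally show ?thesis .
qed

lemma pw:
  fixes g :: "nat \<Rightarrow> real"
  assumes mono: "\<And>j. k \<le> j \<Longrightarrow> j \<le> m \<Longrightarrow> g k \<le> g j"
    and nn: "\<And>j. 1 \<le> j \<Longrightarrow> j \<le> m \<Longrightarrow> g j \<ge> 0"
    and k: "1 \<le> k" "k \<le> m"
  shows "g k / real k \<le> (\<Sum>j=1..m. cw m j * g j)"
proof -
  have "(\<Sum>j=k..m. (1 / real j - 1 / real (j + 1)) * g j) \<le>
        (\<Sum>j=1..m. (1 / real j - 1 / real (j + 1)) * g j)"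
    by (rule sum_mono2) (use k nn in \<open>auto simp: field_simps intro!: mult_nonneg_nonneg\<close>)
  moreover have "(\<Sum>j=k..m. (1 / real j - 1 / real (j + 1)) * g k) \<le>
        (\<Sum>j=k..m. (1 / real j - 1 / real (j + 1)) * g j)"
  proof (rule sum_mono)
    fix j assume j: "j \<in> {k..m}"
    have "0 \<le> 1 / real j - 1 / real (j + 1)" using j k by (auto simp: field_simps)
    then show "(1 / real j - 1 / real (j + 1)) * g k \<le> (1 / real j - 1 / real (j + 1)) * g j"
      using mono[of j] j by (auto intro: mult_left_mono)
  qed
  moreover have "(\<Sum>j=k..m. (1 / real j - 1 / real (j + 1)) * g k) = (1 / real k - 1 / real (m + 1)) * g k"
    using tele[OF k] by (simp add: sum_distrib_right[symmetric])
  moreover have "g k / real (m+1) \<le> g m / real (m+1)"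
    using mono[of m] k by (simp add: divide_right_mono)
  moreover have "g k / real k = (1 / real k - 1 / real (m + 1)) * g k + g k / real (m+1)"
    by (simp add: left_diff_distrib)
  ultimately have "g k / real k \<le> (\<Sum>j=1..m. (1 / real j - 1 / real (j + 1)) * g j) + g m / real (m+1)"
    by linarith
  then show ?thesis using sum_cw[of m g] k by simp
qed

lemma harm_id: "(\<Sum>j=1..m. cw m j * real j) = (\<Sum>j=1..m. 1 / real j)"
proof -
  have "(\<Sum>j=1..m. (1 / real j - 1 / real (j + 1)) * real j) + (if m \<ge> 1 then real m / real (m + 1) else 0)
        = (\<Sum>j=1..m. 1 / real j)"
  proof -
    have a: "(\<Sum>j=1..m. (1 / real j - 1 / real (j + 1)) * real j) = (\<Sum>j=1..m. 1 / real (j+1))"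
    proof (rule sum.cong)
      fix j assume "j \<in> {1..m}"
      then have "real j > 0" by auto
      then have "real j + real j * real j > 0" by (simp add: add_pos_pos)
      then show "(1 / real j - 1 / real (j + 1)) * real j = 1 / real (j+1)"
        using \<open>real j > 0\<close> by (simp add: field_simps)
    qed simp
    have b: "(\<Sum>j=1..m. 1 / real (j+1)) + real m / real (m + 1) = (\<Sum>j=1..m. 1 / real j)" for m
    proof (induction m)
      case 0 then show ?case by simp
    next
      case (Suc n)
      have "(\<Sum>j=1..Suc n. 1 / real (j+1)) + real (Suc n) / real (Suc n + 1)
          = ((\<Sum>j=1..n. 1 / real (j+1)) + real n / real (n + 1))
             + (1 / real (n+2) + real (n+1) / real (n+2) - real n / real (n+1))"
        by simp
      also have "1 / real (n+2) + real (n+1) / real (n+2) - real n / real (n+1) = 1 / real (Suc n)"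
        by (simp add: field_simps)
      finally show ?case using Suc by simp
    qed
    show ?thesis using a b[of m] by (cases "m = 0") auto
  qed
  then show ?thesis using sum_cw[of m real] by simp
qed

theorem theorem3:
  fixes P :: "'t \<Rightarrow> 'x measure" and \<Theta> :: "'t set" and m :: nat
    and L :: "nat \<Rightarrow> 'd \<Rightarrow> 't \<Rightarrow> real"
    and d :: "nat \<Rightarrow> 'x \<Rightarrow> real \<Rightarrow> 'd"
    and s1 :: "'x \<Rightarrow> nat \<Rightarrow> bool"
  assumes prob: "\<And>\<theta>. \<theta> \<in> \<Theta> \<Longrightarrow> prob_space (P \<theta>)"
    and loss_range: "\<And>i \<delta> \<theta>. i \<in> {1..m} \<Longrightarrow> \<theta> \<in> \<Theta> \<Longrightarrow> L i \<delta> \<theta> \<in> {0..1}"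
    and sel_meas: "\<And>i \<theta>. i \<in> {1..m} \<Longrightarrow> \<theta> \<in> \<Theta> \<Longrightarrow>
                      {x \<in> space (P \<theta>). s1 x i} \<in> sets (P \<theta>)"
    and loss_meas: "\<And>i \<theta> q'. i \<in> {1..m} \<Longrightarrow> \<theta> \<in> \<Theta> \<Longrightarrow> q' \<in> {0..1} \<Longrightarrow>
                      (\<lambda>x. L i (d i x q') \<theta>) \<in> borel_measurable (P \<theta>)"
    and risk_control: "\<And>i \<theta> q'. i \<in> {1..m} \<Longrightarrow> \<theta> \<in> \<Theta> \<Longrightarrow> q' \<in> {0..1} \<Longrightarrow>
                      (\<integral>x. L i (d i x q') \<theta> \<partial>P \<theta>) \<le> q'"
    and mono_loss: "\<And>i \<theta> x. i \<in> {1..m} \<Longrightarrow> \<theta> \<in> \<Theta> \<Longrightarrow>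
                      mono_on {0..1} (\<lambda>q'. L i (d i x q') \<theta>)"
    and theta: "\<theta> \<in> \<Theta>"
    and q: "q \<in> {0..1}"
  shows "(\<integral>x. (\<Sum>i\<in>selected m s1 x.
              L i (d i x (q * real (card (selected m s1 x)) / fm m)) \<theta>)
            / max 1 (real (card (selected m s1 x))) \<partial>P \<theta>) \<le> q"
proof -
  interpret prob_space "P \<theta>" using prob theta .
  show ?thesis
  proof (cases "m = 0")
    case True
    then have "\<And>x. selected m s1 x = {}" unfolding selected_def by auto
    then show ?thesis using q by simp
  next
    case False
    then have m1: "1 \<le> m" by simp
    define H where "H = (\<Sum>j=1..m. 1 / real j)"
    define f where "f = fm m"
    have H1: "H \<ge> 1"
    proof -
      have "(\<Sum>j\<in>{1}. 1 / real j) \<le> H" unfolding H_def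
        by (rule sum_mono2) (use m1 in auto)
      then show ?thesis by simp
    qed
    have fH: "f = real m * H" unfolding f_def H_def fm_def by simp
    have fm_ge: "f \<ge> real m" using H1 m1 unfolding fH
      by (metis mult.comm_neutral mult_left_mono of_nat_0_le_iff)
    have fpos: "f > 0" using fm_ge m1 by linarith
    have qarg: "q * real j / f \<in> {0..1}" if "j \<le> m" for j
    proof -
      have "q * real j \<le> 1 * f" using q that fm_ge
        by (intro mult_mono) auto
      then show ?thesis using q fpos by (auto simp: divide_simps)
    qed
    define g where "g i x j = L i (d i x (q * real j / f)) \<theta>" for i x j
    define G where "G x = (\<Sum>i\<in>{1..m}. \<Sum>j=1..m. cw m j * g i x j)" for x
    have gint: "integrable (P \<theta>) (\<lambda>x. g i x j)" if "i \<in> {1..m}" "j \<le> m" for i j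
    proof (rule integrable_const_bound[where B=1])
      show "AE x in P \<theta>. norm (g i x j) \<le> 1"
        using loss_range[OF that(1) theta] unfolding g_def by auto
      show "(\<lambda>x. g i x j) \<in> borel_measurable (P \<theta>)"
        unfolding g_def using loss_meas[OF that(1) theta qarg[OF that(2)]] .
    qed
    have gint_le: "(\<integral>x. g i x j \<partial>P \<theta>) \<le> q * real j / f" if "i \<in> {1..m}" "j \<le> m" for i j
      unfolding g_def using risk_control[OF that(1) theta qarg[OF that(2)]] .
    have tint: "integrable (P \<theta>) (\<lambda>x. cw m j * g i x j)" if i: "i \<in> {1..m}" and j: "j \<in> {1..m}" for i j
      using gint[OF i] j by (intro Bochner_Integration.integrable_mult_right) auto
    have iint: "integrable (P \<theta>) (\<lambda>x. \<Sum>j=1..m. cw m j * g i x j)" if i: "i \<in> {1..m}" for i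
      by (rule Bochner_Integration.integrable_sum) (rule tint[OF i])
    have Gint: "integrable (P \<theta>) G"
      unfolding G_def by (rule Bochner_Integration.integrable_sum) (rule iint)
    have "(\<integral>x. G x \<partial>P \<theta>) = (\<Sum>i\<in>{1..m}. (\<integral>x. (\<Sum>j=1..m. cw m j * g i x j) \<partial>P \<theta>))"
      unfolding G_def by (rule Bochner_Integration.integral_sum) (rule iint)
    also have "\<dots> = (\<Sum>i\<in>{1..m}. \<Sum>j=1..m. (\<integral>x. cw m j * g i x j \<partial>P \<theta>))"
      by (rule sum.cong[OF refl], rule Bochner_Integration.integral_sum, rule tint) auto
    also have "\<dots> = (\<Sum>i\<in>{1..m}. \<Sum>j=1..m. cw m j * (\<integral>x. g i x j \<partial>P \<theta>))"
      by simp
    also have "\<dots> \<le> (\<Sum>i\<in>{1..m}. \<Sum>j=1..m. cw m j * (q * real j / f))"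
      by (intro sum_mono mult_left_mono gint_le cw_nonneg) auto
    also have "\<dots> = real m * (q / f) * (\<Sum>j=1..m. cw m j * real j)"
      by (simp add: sum_distrib_left sum_distrib_right mult_ac)
    also have "\<dots> = q" using harm_id[of m] fpos m1 H1 unfolding fH H_def[symmetric] by simp
    finally have Gle: "(\<integral>x. G x \<partial>P \<theta>) \<le> q" .
    have gnn: "g i x j \<ge> 0" if "i \<in> {1..m}" for i x j
      using loss_range[OF that theta] unfolding g_def by auto
    have Gnn: "G x \<ge> 0" for x
      unfolding G_def using gnn cw_nonneg by (auto intro!: sum_nonneg mult_nonneg_nonneg)
    have pt: "(\<Sum>i\<in>selected m s1 x. g i x (card (selected m s1 x))) / max 1 (real (card (selected m s1 x)))
        \<le> G x" for x
    proof -
      define S where "S = selected m s1 x"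
      define K where "K = card S"
      have Ssub: "S \<subseteq> {1..m}" unfolding S_def selected_def by auto
      then have fin: "finite S" using finite_subset by blast
      have Km: "K \<le> m" unfolding K_def using card_mono[OF _ Ssub] by simp
      show ?thesis
      proof (cases "K = 0")
        case True
        then have "S = {}" using fin K_def by simp
        then show ?thesis using Gnn[of x] by (simp add: S_def)
      next
        case False
        then have K1: "1 \<le> K" by simp
        have "(\<Sum>i\<in>S. g i x K) / max 1 (real K) = (\<Sum>i\<in>S. g i x K / real K)"
          using K1 by (simp add: sum_divide_distrib)
        also have "\<dots> \<le> (\<Sum>i\<in>{1..m}. g i x K / real K)"
          by (rule sum_mono2) (use Ssub gnn in auto)
        also have "\<dots> \<le> G x" unfolding G_def
        proof (rule sum_mono)
          fix i assume i: "i \<in> {1..m}"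
          show "g i x K / real K \<le> (\<Sum>j=1..m. cw m j * g i x j)"
          proof (rule pw[OF _ _ K1 Km])
            fix j assume j: "K \<le> j" "j \<le> m"
            have le: "q * real K / f \<le> q * real j / f"
              using j q fpos by (auto intro!: divide_right_mono mult_left_mono)
            show "g i x K \<le> g i x j"
              using mono_onD[OF mono_loss[OF i theta, of x] qarg[OF Km] qarg[OF j(2)] le]
              unfolding g_def .
          next
            fix j show "g i x j \<ge> 0" using gnn[OF i] .
          qed
        qed
        finally show ?thesis unfolding S_def K_def .
      qed
    qed
    show ?thesis
    proof (cases "integrable (P \<theta>) (\<lambda>x. (\<Sum>i\<in>selected m s1 x.
              L i (d i x (q * real (card (selected m s1 x)) / fm m)) \<theta>)
            / max 1 (real (card (selected m s1 x))))")
      case True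
      have "(\<integral>x. (\<Sum>i\<in>selected m s1 x.
              L i (d i x (q * real (card (selected m s1 x)) / fm m)) \<theta>)
            / max 1 (real (card (selected m s1 x))) \<partial>P \<theta>) \<le> (\<integral>x. G x \<partial>P \<theta>)"
        by (rule integral_mono[OF True Gint]) (use pt in \<open>simp add: g_def f_def\<close>)
      then show ?thesis using Gle by linarith
    next
      case False
      then show ?thesis using q by (simp add: not_integrable_integral_eq)
    qed
  qed
qed

end
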